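(* Let $I\subseteq\mathbb{R}$ be an open interval (possibly unbounded), $\Sigma=I\times\mathbb{R}$, and let $h\ge1$, $L\ge1$ be integers. Let $F\in C^\omega(\Sigma,\mathbb{R}^2)$ be a non-singular map of the form $F(x,y)=\Big(\sum_{l=1}^L p_{2hl}(x)y^{2hl}+p_1(x)y+p_0(x),\;q_{2h}(x)y^{2h}+q_0(x)\Big)$. If $p_1(x)\neq0$ for all $x\in I$, then $F$ is injective.
   Context: For $F=(P,Q)$, $d_F=P_xQ_y-P_yQ_x$ is the Jacobian determinant; $F$ is non-singular if $d_F(x,y)\neq0$ for all $(x,y)\in\Sigma$. $C^\omega$ denotes real analytic. *)

theory Defs
  imports "HOL-Analysis.Analysis"
begin

text \<open>Real analyticity of a real-valued function of two real variables on a set S: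
  near every point of S it is the (unconditionally, i.e. absolutely, convergent)
  sum of a double power series.\<close>
definition real_analytic2_on :: "(real \<times> real \<Rightarrow> real) \<Rightarrow> (real \<times> real) set \<Rightarrow> bool" where
  "real_analytic2_on f S \<longleftrightarrow>
     (\<forall>(a, b) \<in> S. \<exists>r > 0. \<exists>c :: nat \<Rightarrow> nat \<Rightarrow> real.
        \<forall>x y. dist (x, y) (a, b) < r \<longrightarrow>
          ((\<lambda>(i, j). c i j * (x - a) ^ i * (y - b) ^ j) has_sum f (x, y)) UNIV)"

definition real_analytic_map_on :: "(real \<times> real \<Rightarrow> real \<times> real) \<Rightarrow> (real \<times> real) set \<Rightarrow> bool" where
  "real_analytic_map_on F S \<longleftrightarrow>
     real_analytic2_on (\<lambda>z. fst (F z)) S \<and> real_analytic2_on (\<lambda>z. snd (F z)) S"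

definition jac_det :: "(real \<times> real \<Rightarrow> real \<times> real) \<Rightarrow> real \<Rightarrow> real \<Rightarrow> real" where
  "jac_det F x y =
     deriv (\<lambda>s. fst (F (s, y))) x * deriv (\<lambda>t. snd (F (x, t))) y
   - deriv (\<lambda>t. fst (F (x, t))) y * deriv (\<lambda>s. snd (F (s, y))) x"

end

theory Submission
  imports Defs "HOL-Computational_Algebra.Polynomial"
begin

definition PP :: "nat \<Rightarrow> nat \<Rightarrow> (nat \<Rightarrow> real \<Rightarrow> real) \<Rightarrow> real \<Rightarrow> real \<Rightarrow> real" where
  "PP h L p x y = (\<Sum>l = 1..L. p (2*h*l) x * y ^ (2*h*l)) + p 1 x * y + p 0 x"
definition QQ :: "nat \<Rightarrow> (nat \<Rightarrow> real \<Rightarrow> real) \<Rightarrow> real \<Rightarrow> real \<Rightarrow> real" where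
  "QQ h q x y = q (2*h) x * y ^ (2*h) + q 0 x"
definition PX :: "nat \<Rightarrow> nat \<Rightarrow> (nat \<Rightarrow> real \<Rightarrow> real) \<Rightarrow> real \<Rightarrow> real \<Rightarrow> real" where
  "PX h L p' x y = (\<Sum>l = 1..L. p' (2*h*l) x * y ^ (2*h*l)) + p' 1 x * y + p' 0 x"
definition PY :: "nat \<Rightarrow> nat \<Rightarrow> (nat \<Rightarrow> real \<Rightarrow> real) \<Rightarrow> real \<Rightarrow> real \<Rightarrow> real" where
  "PY h L p x y = (\<Sum>l = 1..L. p (2*h*l) x * (real (2*h*l) * y ^ (2*h*l - 1))) + p 1 x"
definition QX :: "nat \<Rightarrow> (nat \<Rightarrow> real \<Rightarrow> real) \<Rightarrow> real \<Rightarrow> real \<Rightarrow> real" where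
  "QX h q' x y = q' (2*h) x * y ^ (2*h) + q' 0 x"
definition QY :: "nat \<Rightarrow> (nat \<Rightarrow> real \<Rightarrow> real) \<Rightarrow> real \<Rightarrow> real \<Rightarrow> real" where
  "QY h q x y = q (2*h) x * (real (2*h) * y ^ (2*h - 1))"
definition DJ where
  "DJ h L p p' q q' x y = PX h L p' x y * QY h q x y - PY h L p x y * QX h q' x y"

lemma pm_even: "(-y::real)^(2*k) = y^(2*k)" by (simp add: power_mult)
lemma pm_odd: "k \<ge> 1 \<Longrightarrow> (-y::real)^(2*k-1) = -(y^(2*k-1))"
  by (cases k) (auto simp: power_mult)

lemma nz_sign:
  fixes f :: "real \<Rightarrow> real"
  assumes c: "continuous_on UNIV f" and n: "\<And>t. f t \<noteq> 0"
  shows "f y * f 0 > 0"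
proof (rule ccontr)
  assume "\<not> ?thesis"
  then have "0 \<in> closed_segment (f y) (f 0)"
    using n[of y] n[of 0] unfolding closed_segment_eq_real_ivl
    by (auto simp: not_less mult_le_0_iff)
  then obtain t where "f t = 0"
    using IVT'_closed_segment_real[of 0 f y 0] continuous_on_subset[OF c] by blast
  with n show False by blast
qed

lemma alg1: fixes a A P :: real assumes "a \<noteq> 0" "A \<noteq> 0" "P * a = A"
  shows "((c' * A - c * (k * (a' * P))) / (A * A) * (A * Y) + e') * a = (c' * a - c * k * a') * Y + e' * a"
proof -
  have "P = A / a" using assms by (simp add: field_simps)
  then show ?thesis using assms by (simp add: field_simps)
qed

lemma neg_mult_pos: "(A::real) * X > 0 \<Longrightarrow> A < 0 \<Longrightarrow> X < 0"
  by (simp add: zero_less_mult_iff)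
lemma pos_mult_pos: "(A::real) * X > 0 \<Longrightarrow> A > 0 \<Longrightarrow> X > 0"
  by (simp add: zero_less_mult_iff)

locale core =
  fixes I :: "real set" and h L :: nat and p q p' q' :: "nat \<Rightarrow> real \<Rightarrow> real"
  assumes openI: "open I" and intI: "is_interval I" and h1: "h \<ge> 1"
  and dp: "\<And>x l. x \<in> I \<Longrightarrow> l \<in> {1..L} \<Longrightarrow> (p (2*h*l) has_real_derivative p' (2*h*l) x) (at x)"
  and dp1: "\<And>x. x \<in> I \<Longrightarrow> (p 1 has_real_derivative p' 1 x) (at x)"
  and dp0: "\<And>x. x \<in> I \<Longrightarrow> (p 0 has_real_derivative p' 0 x) (at x)"
  and dq0: "\<And>x. x \<in> I \<Longrightarrow> (q 0 has_real_derivative q' 0 x) (at x)"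
  and dq: "\<And>x. x \<in> I \<Longrightarrow> (q (2*h) has_real_derivative q' (2*h) x) (at x)"
  and nz: "\<And>x y. x \<in> I \<Longrightarrow> DJ h L p p' q q' x y \<noteq> 0"
  and p1nz: "\<And>x. x \<in> I \<Longrightarrow> p 1 x \<noteq> 0"
  and q0pos: "\<And>x. x \<in> I \<Longrightarrow> q' 0 x > 0"
begin

lemma inI: "a \<in> I \<Longrightarrow> b \<in> I \<Longrightarrow> a \<le> x \<Longrightarrow> x \<le> b \<Longrightarrow> x \<in> I"
  using intI unfolding is_interval_1 by blast

abbreviation "P \<equiv> PP h L p"
abbreviation "Q \<equiv> QQ h q"
abbreviation "D \<equiv> DJ h L p p' q q'"

lemma P_neg: "P x (-y) = P x y - 2 * p 1 x * y"
proof -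
  have "(-y)^(2*h*l) = y^(2*h*l)" for l
    using pm_even[of y "h*l"] by (simp add: mult.assoc)
  then show ?thesis by (simp add: PP_def)
qed

lemma Q_neg: "Q x (-y) = Q x y"
  by (simp add: QQ_def pm_even)

lemma D_sum: "D x y + D x (-y) = 2 * (p' 1 x * y * QY h q x y - p 1 x * QX h q' x y)"
proof -
  have e: "(-y)^(2*h*l) = y^(2*h*l)" for l
    using pm_even[of y "h*l"] by (simp add: mult.assoc)
  have o: "l \<ge> 1 \<Longrightarrow> (-y)^(2*h*l - 1) = - (y^(2*h*l - 1))" for l
    using pm_odd[of "h*l" y] h1 by (simp add: mult.assoc)
  have e1: "PX h L p' x (-y) = PX h L p' x y - 2 * p' 1 x * y"
    by (simp add: PX_def e)
  have e2: "PY h L p x (-y) = - PY h L p x y + 2 * p 1 x"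
  proof -
    have "(\<Sum>l = 1..L. p (2*h*l) x * (real (2*h*l) * (-y) ^ (2*h*l - 1))) =
       - (\<Sum>l = 1..L. p (2*h*l) x * (real (2*h*l) * y ^ (2*h*l - 1)))"
      unfolding sum_negf[symmetric] by (rule sum.cong[OF refl]) (use o in auto)
    then show ?thesis by (simp add: PY_def)
  qed
  have e3: "QX h q' x (-y) = QX h q' x y" by (simp add: QX_def pm_even)
  have e4: "QY h q x (-y) = - QY h q x y" using pm_odd[of h y] h1 by (simp add: QY_def)
  show ?thesis unfolding DJ_def e1 e2 e3 e4 by (simp add: algebra_simps)
qed

lemma D_zero: "D x 0 = - p 1 x * q' 0 x"
proof -
  have "QY h q x 0 = 0" using h1 by (simp add: QY_def)
  moreover have "PY h L p x 0 = p 1 x"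
  proof -
    have "(0::real) ^ (2*h*l - 1) = 0" if "l \<in> {1..L}" for l
    proof -
      have "h * l \<ge> 1" using h1 that by (simp add: Suc_le_eq)
      moreover have "2*h*l = 2*(h*l)" by (simp add: mult.assoc)
      ultimately have "0 < 2*h*l - 1" by linarith
      then show ?thesis by (rule zero_power)
    qed
    then have "(\<Sum>l = 1..L. p (2*h*l) x * (real (2*h*l) * 0 ^ (2*h*l - 1))) = 0"
      by (intro sum.neutral) simp
    then show ?thesis unfolding PY_def by simp
  qed
  moreover have "QX h q' x 0 = q' 0 x" using h1 by (simp add: QX_def)
  ultimately show ?thesis by (simp add: DJ_def)
qed

lemma D_cont: "continuous_on UNIV (D x)"
  unfolding DJ_def PX_def PY_def QX_def QY_def by (intro continuous_intros)

lemma D_sign: assumes "x \<in> I" shows "D x y * p 1 x < 0"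
proof -
  have s0: "D x 0 * p 1 x < 0"
  proof -
    have "D x 0 * p 1 x = -((p 1 x * p 1 x) * q' 0 x)" by (simp add: D_zero)
    moreover have "p 1 x * p 1 x > 0" using p1nz[OF assms] not_real_square_gt_zero by blast
    ultimately show ?thesis using q0pos[OF assms] by (simp add: mult_pos_pos)
  qed
  have "D x y * D x 0 > 0" using nz_sign[OF D_cont] nz[OF assms] by blast
  then show ?thesis using s0
    by (auto simp: zero_less_mult_iff mult_less_0_iff)
qed

definition r where "r x = q (2*h) x / p 1 x ^ (2*h)"
definition B where "B x T = r x * T + q 0 x"

lemma r_deriv: assumes x: "x \<in> I"
  shows "(r has_real_derivative ((q' (2*h) x * p 1 x ^ (2*h) - q (2*h) x * (real (2*h) * (p' 1 x * p 1 x ^ (2*h - Suc 0)))) / (p 1 x ^ (2*h) * p 1 x ^ (2*h)))) (at x)"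
proof -
  have "r = (\<lambda>x. q (2*h) x / p 1 x ^ (2*h))" by (simp add: r_def fun_eq_iff)
  then show ?thesis
    using DERIV_divide[OF dq[OF x] DERIV_power[OF dp1[OF x], of "2*h"]] p1nz[OF x] by simp
qed

lemma Q_B: assumes "x \<in> I" shows "Q x y = B x ((p 1 x * y) ^ (2*h))"
  using p1nz[OF assms] by (simp add: QQ_def B_def r_def power_mult_distrib)

lemma dB_pos: assumes x: "x \<in> I" and T: "T \<ge> 0"
  shows "\<exists>d. ((\<lambda>x. B x T) has_real_derivative d) (at x) \<and> d > 0"
proof -
  define m where "m = 2*h"
  have m1: "m \<ge> 1" using h1 by (simp add: m_def)
  define a where "a = p 1 x"
  define a' where "a' = p' 1 x"
  define c where "c = q m x"
  define c' where "c' = q' m x"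
  define e' where "e' = q' 0 x"
  have a0: "a \<noteq> 0" using p1nz[OF x] by (simp add: a_def)
  define d where "d = (c' * a^m - c * (real m * (a' * a^(m - Suc 0)))) / (a^m * a^m) * T + e'"
  have der: "((\<lambda>x. B x T) has_real_derivative d) (at x)"
  proof -
    have "(\<lambda>x. B x T) = (\<lambda>x. r x * T + q 0 x)" by (simp add: B_def fun_eq_iff)
    then show ?thesis using DERIV_add[OF DERIV_cmult_right[OF r_deriv[OF x], of T] dq0[OF x]]
      by (simp add: d_def a_def a'_def c_def c'_def e'_def m_def)
  qed
  define y where "y = root m T / a"
  have Ty: "T = a^m * y^m"
  proof -
    have "a * y = root m T" using a0 by (simp add: y_def)
    then have "(a*y)^m = T" using real_root_pow_pos2[of m T] m1 T by simp
    then show ?thesis by (simp add: power_mult_distrib)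
  qed
  have pa: "a^(m - Suc 0) * a = a^m" using m1
    by (metis One_nat_def Suc_diff_le diff_Suc_Suc minus_nat.diff_0 power_Suc2)
  have py: "y * y^(m - 1) = y^m" using m1
    by (metis One_nat_def Suc_diff_le diff_Suc_Suc minus_nat.diff_0 power_Suc)
  have da: "d * a = (c' * a - c * real m * a') * y^m + e' * a"
    unfolding d_def Ty by (rule alg1[OF a0 _ pa]) (use a0 in simp)
  have Ev0: "D x y + D x (-y) = 2 * (a' * y * (c * (real m * y^(m-1))) - a * (c' * y^m + e'))"
    unfolding D_sum QY_def QX_def a_def a'_def c_def c'_def e'_def m_def by simp
  have "a' * y * (c * (real m * y^(m-1))) = a' * c * real m * (y * y^(m-1))" by (simp add: algebra_simps)
  then have "a' * y * (c * (real m * y^(m-1))) = a' * c * real m * y^m" using py by simp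
  then have Ev: "D x y + D x (-y) = -2 * (d * a)" unfolding Ev0 da by (simp add: algebra_simps)
  have "(D x y + D x (-y)) * a < 0" using D_sign[OF x, of y] D_sign[OF x, of "-y"]
    by (simp add: a_def distrib_right)
  then have "d * (a * a) > 0" unfolding Ev by (simp add: algebra_simps)
  then have "d > 0" using a0 by (simp add: zero_less_mult_iff)
  with der show ?thesis by blast
qed

lemma B_mono: assumes "x1 \<in> I" "x2 \<in> I" "x1 < x2" "T \<ge> 0" shows "B x1 T < B x2 T"
proof (rule DERIV_pos_imp_increasing[OF assms(3)])
  fix x assume "x1 \<le> x" "x \<le> x2"
  then have "x \<in> I" using assms inI by blast
  then show "\<exists>y. ((\<lambda>x. B x T) has_real_derivative y) (at x) \<and> 0 < y" using dB_pos assms(4) by blast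
qed

lemma B_inj: assumes "x1 \<in> I" "x2 \<in> I" "T \<ge> 0" "B x1 T = B x2 T" shows "x1 = x2"
proof (rule ccontr)
  assume "x1 \<noteq> x2"
  then consider "x1 < x2" | "x2 < x1" by linarith
  then show False
  proof cases
    case 1 then show False using B_mono[OF assms(1,2) 1 assms(3)] assms(4) by simp
  next
    case 2 then show False using B_mono[OF assms(2,1) 2 assms(3)] assms(4) by simp
  qed
qed

lemma P_chain: assumes x: "x \<in> I" and f: "(f has_real_derivative f') (at x)"
  shows "((\<lambda>t. P t (f t)) has_real_derivative (PX h L p' x (f x) + PY h L p x (f x) * f')) (at x)"
proof -
  have d1: "((\<lambda>t. p (2*h*l) t * f t ^ (2*h*l)) has_real_derivative
      (p' (2*h*l) x * f x ^ (2*h*l) + p (2*h*l) x * (real (2*h*l) * f x ^ (2*h*l - 1)) * f')) (at x)"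
    if l: "l \<in> {1..L}" for l
    using DERIV_mult'[OF dp[OF x l] DERIV_power[OF f, of "2*h*l"]] by (simp add: algebra_simps)
  have ds: "((\<lambda>t. \<Sum>l=1..L. p (2*h*l) t * f t ^ (2*h*l)) has_real_derivative
      (\<Sum>l=1..L. p' (2*h*l) x * f x ^ (2*h*l) + p (2*h*l) x * (real (2*h*l) * f x ^ (2*h*l - 1)) * f')) (at x)"
    by (rule DERIV_sum) (rule d1)
  have der: "((\<lambda>t. (\<Sum>l=1..L. p (2*h*l) t * f t ^ (2*h*l)) + p 1 t * f t + p 0 t) has_real_derivative
      ((\<Sum>l=1..L. p' (2*h*l) x * f x ^ (2*h*l) + p (2*h*l) x * (real (2*h*l) * f x ^ (2*h*l - 1)) * f')
       + (p 1 x * f' + p' 1 x * f x) + p' 0 x)) (at x)"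
    by (intro DERIV_add ds DERIV_mult'[OF dp1[OF x] f] dp0[OF x])
  have eq: "(\<Sum>l=1..L. p' (2*h*l) x * f x ^ (2*h*l) + p (2*h*l) x * (real (2*h*l) * f x ^ (2*h*l - 1)) * f')
       + (p 1 x * f' + p' 1 x * f x) + p' 0 x = PX h L p' x (f x) + PY h L p x (f x) * f'"
    unfolding PX_def PY_def by (simp add: sum.distrib sum_distrib_right sum_distrib_left algebra_simps)
  show ?thesis unfolding PP_def eq[symmetric] by (rule der)
qed

lemma Q_chain: assumes x: "x \<in> I" and f: "(f has_real_derivative f') (at x)"
  shows "((\<lambda>t. Q t (f t)) has_real_derivative (QX h q' x (f x) + QY h q x (f x) * f')) (at x)"
proof -
  have "((\<lambda>t. q (2*h) t * f t ^ (2*h) + q 0 t) has_real_derivative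
      (q (2*h) x * (real (2*h) * (f' * f x ^ (2*h - Suc 0))) + q' (2*h) x * f x ^ (2*h) + q' 0 x)) (at x)"
    by (intro DERIV_add DERIV_mult'[OF dq[OF x] DERIV_power[OF f]] dq0[OF x])
  then show ?thesis unfolding QQ_def QX_def QY_def by (simp add: algebra_simps)
qed

lemma curve:
  assumes ac: "a < c" and aI: "a \<in> I" and cI: "c \<in> I" and yc_cont: "continuous_on {a..c} yc"
    and yc_der: "\<And>t. a < t \<Longrightarrow> t < c \<Longrightarrow> (yc has_real_derivative yc' t) (at t)"
    and lev: "\<And>t. a \<le> t \<Longrightarrow> t \<le> c \<Longrightarrow> Q t (yc t) = b"
  shows "\<exists>t k. a < t \<and> t < c \<and> P c (yc c) - P a (yc a) = (c - a) * k \<and> k * QY h q t (yc t) = D t (yc t)"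
proof -
  have sub: "t \<in> I" if "a \<le> t" "t \<le> c" for t using inI aI cI that by blast
  have pcl: "continuous_on {a..c} (p (2*h*l))" if "l \<in> {1..L}" for l
    by (intro continuous_at_imp_continuous_on ballI DERIV_isCont[OF dp] that) (use sub in auto)
  have pc1: "continuous_on {a..c} (p 1)"
    by (intro continuous_at_imp_continuous_on ballI DERIV_isCont[OF dp1]) (use sub in auto)
  have pc0: "continuous_on {a..c} (p 0)"
    by (intro continuous_at_imp_continuous_on ballI DERIV_isCont[OF dp0]) (use sub in auto)
  have kc: "continuous_on {a..c} (\<lambda>t. P t (yc t))" unfolding PP_def
    using pc1 by (auto intro!: continuous_intros pcl pc1 pc0 yc_cont)
  have kd: "(\<lambda>t. P t (yc t)) differentiable (at t)" if "a < t" "t < c" for t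
    using P_chain[OF sub yc_der[OF that]] that unfolding real_differentiable_def by force
  obtain k t where t: "a < t" "t < c" and kder: "((\<lambda>t. P t (yc t)) has_real_derivative k) (at t)"
    and keq: "P c (yc c) - P a (yc a) = (c - a) * k"
    using MVT[OF ac kc kd] by blast
  have tI: "t \<in> I" using sub t by auto
  have k: "k = PX h L p' t (yc t) + PY h L p t (yc t) * yc' t"
    using DERIV_unique[OF kder P_chain[OF tI yc_der[OF t]]] .
  have qd: "((\<lambda>s. Q s (yc s)) has_real_derivative (QX h q' t (yc t) + QY h q t (yc t) * yc' t)) (at t)"
    using Q_chain[OF tI yc_der[OF t]] .
  have "((\<lambda>s. b) has_real_derivative (QX h q' t (yc t) + QY h q t (yc t) * yc' t)) (at t)"
    by (rule has_field_derivative_transform_within_open[OF qd, of "{a<..<c}"]) (use t lev in auto)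
  then have "QX h q' t (yc t) + QY h q t (yc t) * yc' t = 0"
    using DERIV_unique DERIV_const by blast
  then have qy: "QY h q t (yc t) * yc' t = - QX h q' t (yc t)" by linarith
  have "k * QY h q t (yc t) = PX h L p' t (yc t) * QY h q t (yc t) + PY h L p t (yc t) * (QY h q t (yc t) * yc' t)"
    unfolding k by (simp add: algebra_simps)
  then have "k * QY h q t (yc t) = D t (yc t)" unfolding qy DJ_def by simp
  then show ?thesis using t keq by blast
qed

lemma cont_coeffs: assumes "S \<subseteq> I"
  shows "continuous_on S (p 1)" "continuous_on S (q 0)" "continuous_on S (q (2*h))"
  by (intro continuous_at_imp_continuous_on ballI DERIV_isCont[OF dp1] DERIV_isCont[OF dq0]
      DERIV_isCont[OF dq]; use assms in blast)+

lemma QY_mul: "QY h q t y * y = real (2*h) * (r t * (p 1 t * y) ^ (2*h))" if "t \<in> I"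
proof -
  have "y^(2*h - 1) * y = y^(2*h)" using h1
    by (metis One_nat_def Suc_diff_le le_add2 mult_2 order_trans power_Suc2 diff_Suc_Suc minus_nat.diff_0)
  moreover have "r t * (p 1 t * y) ^ (2*h) = q (2*h) t * y^(2*h)"
    using p1nz[OF that] by (simp add: r_def power_mult_distrib)
  ultimately show ?thesis unfolding QY_def by (metis mult.assoc mult.left_commute)
qed

lemma Hlem:
  assumes ac: "a < c" and aI: "a \<in> I" and cI: "c \<in> I" and Ta: "Ta \<ge> 0" and Tc: "Tc \<ge> 0"
    and TT: "Ta \<noteq> Tc" and Bab: "B a Ta = B c Tc" and eps: "\<epsilon> = 1 \<or> \<epsilon> = -1"
  shows "\<epsilon> * (Tc - Ta) * (P c (\<epsilon> * root (2*h) Tc / p 1 c) - P a (\<epsilon> * root (2*h) Ta / p 1 a)) > 0"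
proof -
  define b where "b = B a Ta"
  have m0: "0 < 2*h" using h1 by simp
  have sub: "t \<in> I" if "a \<le> t" "t \<le> c" for t using inI aI cI that by blast
  have geTa: "B t Ta \<ge> b" if "a \<le> t" "t \<le> c" for t
    using B_mono[OF aI sub[OF that] _ Ta] that unfolding b_def by (cases "a = t") auto
  have gtTa: "B t Ta > b" if "a < t" "t \<le> c" for t
    using B_mono[OF aI sub _ Ta] that unfolding b_def by auto
  have leTc: "B t Tc \<le> b" if "a \<le> t" "t \<le> c" for t
    using B_mono[OF sub[OF that] cI _ Tc] that Bab unfolding b_def by (cases "t = c") auto
  have ltTc: "B t Tc < b" if "a \<le> t" "t < c" for t
    using B_mono[OF sub cI _ Tc] that Bab unfolding b_def by auto
  have Bdiff: "B t Tc - B t Ta = r t * (Tc - Ta)" for t by (simp add: B_def algebra_simps)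
  have rnz: "r t \<noteq> 0" if "a \<le> t" "t \<le> c" for t
  proof
    assume r0: "r t = 0"
    then have eq: "B t Ta = B t Tc" by (simp add: B_def)
    show False
    proof (cases "a < t")
      case True then show ?thesis using gtTa[OF True that(2)] leTc[OF that] eq by simp
    next
      case False then have "t < c" using that ac by simp
      then show ?thesis using ltTc[OF that(1)] geTa[OF that] eq by simp
    qed
  qed
  define T where "T t = (b - q 0 t) / r t" for t
  have BT: "B t (T t) = b" if "a \<le> t" "t \<le> c" for t
    using rnz[OF that] by (simp add: B_def T_def field_simps)
  have Tr: "(T t - S) * r t = b - B t S" if "a \<le> t" "t \<le> c" for t S
    using rnz[OF that] by (simp add: B_def T_def field_simps)
  have Tge: "T t \<ge> 0" if "a \<le> t" "t \<le> c" for t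
  proof (rule ccontr)
    assume "\<not> ?thesis"
    then have "T t - Ta < 0" "T t - Tc < 0" using Ta Tc by auto
    then have "(T t - Ta) * (T t - Tc) > 0" by (simp add: mult_neg_neg)
    moreover have "((T t - Ta) * r t) * ((T t - Tc) * r t) \<le> 0"
      using Tr[OF that, of Ta] Tr[OF that, of Tc] geTa[OF that] leTc[OF that]
      by (simp add: mult_nonpos_nonneg)
    ultimately show False using rnz[OF that]
      by (metis (no_types, opaque_lifting) mult.assoc mult.left_commute not_le not_real_square_gt_zero zero_less_mult_iff)
  qed
  have Tgt: "T t > 0" if "a < t" "t < c" for t
  proof (rule ccontr)
    assume "\<not> ?thesis"
    then have "T t - Ta \<le> 0" "T t - Tc \<le> 0" using Ta Tc by auto
    then have "(T t - Ta) * (T t - Tc) \<ge> 0" by (simp add: mult_nonpos_nonpos)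
    moreover have "((T t - Ta) * r t) * ((T t - Tc) * r t) < 0"
      using Tr[of t Ta] Tr[of t Tc] gtTa[of t] ltTc[of t] that
      by (simp add: mult_neg_pos)
    ultimately show False using rnz[of t] that
      by (metis (no_types, opaque_lifting) mult.assoc mult.left_commute not_le not_real_square_gt_zero zero_less_mult_iff less_eq_real_def mult_nonneg_nonneg)
  qed
  have rsign: "r t * (Tc - Ta) < 0" if "a < t" "t < c" for t
    using Bdiff[of t] gtTa[of t] ltTc[of t] that by simp
  have Ta_eq: "T a = Ta" using rnz[of a] ac by (simp add: T_def b_def B_def)
  have Tc_eq: "T c = Tc" using rnz[of c] ac Bab by (simp add: T_def b_def B_def)
  have e2: "\<epsilon> ^ (2*h) = 1" using eps by (auto simp: power_mult)
  have ee: "\<epsilon> * \<epsilon> = 1" using eps by auto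
  define yc where "yc t = \<epsilon> * root (2*h) (T t) / p 1 t" for t
  have py: "p 1 t * yc t = \<epsilon> * root (2*h) (T t)" if "a \<le> t" "t \<le> c" for t
    using p1nz[OF sub[OF that]] by (simp add: yc_def)
  have pyT: "(p 1 t * yc t) ^ (2*h) = T t" if "a \<le> t" "t \<le> c" for t
    unfolding py[OF that] power_mult_distrib e2 using m0 Tge[OF that] by simp
  have lev: "Q t (yc t) = b" if "a \<le> t" "t \<le> c" for t
    using Q_B[OF sub[OF that]] pyT[OF that] BT[OF that] by simp
  have ycc: "continuous_on {a..c} yc"
  proof -
    have S: "{a..c} \<subseteq> I" using sub by auto
    have rc: "continuous_on {a..c} r" unfolding r_def[abs_def]
      using cont_coeffs[OF S] p1nz S by (auto intro!: continuous_intros)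
    have Tcn: "continuous_on {a..c} T" unfolding T_def[abs_def]
      using cont_coeffs[OF S] rc rnz by (auto intro!: continuous_intros)
    show ?thesis unfolding yc_def[abs_def]
      using cont_coeffs[OF S] Tcn p1nz S by (auto intro!: continuous_intros)
  qed
  have ycd: "(yc has_real_derivative deriv yc t) (at t)" if tt: "a < t" "t < c" for t
  proof -
    have tI: "t \<in> I" using sub tt by auto
    have dT: "(T has_real_derivative ((0 - q' 0 t) * r t - (b - q 0 t) * ((q' (2*h) t * p 1 t ^ (2*h) - q (2*h) t * (real (2*h) * (p' 1 t * p 1 t ^ (2*h - Suc 0)))) / (p 1 t ^ (2*h) * p 1 t ^ (2*h)))) / (r t * r t)) (at t)"
      unfolding T_def[abs_def]
      by (rule DERIV_divide[OF DERIV_diff[OF DERIV_const dq0[OF tI]] r_deriv[OF tI]]) (use rnz tt in auto)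
    obtain dR where dR: "((\<lambda>t. root (2*h) (T t)) has_real_derivative dR) (at t)"
      using DERIV_chain'[OF dT DERIV_real_root[OF m0 Tgt[OF tt]]] by blast
    have "\<exists>E. ((\<lambda>t. \<epsilon> * root (2*h) (T t) / p 1 t) has_real_derivative E) (at t)"
      using DERIV_divide[OF DERIV_cmult[OF dR] dp1[OF tI]] p1nz[OF tI] by blast
    then have "yc differentiable (at t)" unfolding yc_def[abs_def] real_differentiable_def by blast
    then show ?thesis using DERIV_deriv_iff_real_differentiable by blast
  qed
  obtain t k where t: "a < t" "t < c" and keq: "P c (yc c) - P a (yc a) = (c - a) * k"
    and kD: "k * QY h q t (yc t) = D t (yc t)"
    using curve[OF ac aI cI ycc ycd lev] by blast
  have tI: "t \<in> I" using sub t by auto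
  define \<rho> where "\<rho> = root (2*h) (T t)"
  have \<rho>0: "\<rho> > 0" unfolding \<rho>_def using real_root_gt_zero[OF m0 Tgt[OF t]] .
  define Z where "Z = QY h q t (yc t) * yc t"
  have Z: "Z = real (2*h) * (r t * T t)" unfolding Z_def QY_mul[OF tI] pyT[of t] using t pyT[of t] by simp
  have ycv: "yc t = \<epsilon> * \<rho> / p 1 t" by (simp add: yc_def \<rho>_def)
  define W where "W = \<epsilon> * (Tc - Ta) * k"
  have "W * Z = (Tc - Ta) * \<rho> * (D t (yc t) * p 1 t) / (p 1 t * p 1 t)"
  proof -
    have "W * Z = \<epsilon> * (Tc - Ta) * (k * QY h q t (yc t)) * yc t" by (simp add: W_def Z_def algebra_simps)
    also have "\<dots> = \<epsilon> * (Tc - Ta) * D t (yc t) * yc t" by (simp only: kD)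
    also have "\<dots> = (\<epsilon> * \<epsilon>) * (Tc - Ta) * D t (yc t) * \<rho> / p 1 t"
      using p1nz[OF tI] by (subst (2) ycv) (simp add: field_simps)
    also have "\<dots> = (Tc - Ta) * \<rho> * (D t (yc t) * p 1 t) / (p 1 t * p 1 t)" using p1nz[OF tI] ee by (simp add: field_simps)
    finally show ?thesis .
  qed
  then have WZ: "(W * Z) * (Tc - Ta) = ((Tc - Ta) * (Tc - Ta)) * \<rho> * (D t (yc t) * p 1 t) / (p 1 t * p 1 t)"
    by (simp add: algebra_simps)
  have Yneg: "((Tc - Ta) * (Tc - Ta)) * \<rho> * (D t (yc t) * p 1 t) / (p 1 t * p 1 t) < 0"
  proof -
    have "Tc - Ta \<noteq> 0" using TT by simp
    then have A: "(Tc - Ta) * (Tc - Ta) > 0" using not_real_square_gt_zero by blast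
    have C: "p 1 t * p 1 t > 0" using p1nz[OF tI] not_real_square_gt_zero by blast
    have "((Tc - Ta) * (Tc - Ta)) * \<rho> > 0" using A \<rho>0 by simp
    then have "((Tc - Ta) * (Tc - Ta)) * \<rho> * (D t (yc t) * p 1 t) < 0"
      using D_sign[OF tI] mult_pos_neg by blast
    then show ?thesis using C divide_neg_pos by blast
  qed
  have Ne: "Z * (Tc - Ta) = (real (2*h) * T t) * (r t * (Tc - Ta))" unfolding Z by (simp add: algebra_simps)
  have "real (2*h) * T t > 0" using m0 Tgt[OF t] by simp
  then have N: "Z * (Tc - Ta) < 0" unfolding Ne using rsign[OF t] mult_pos_neg by blast
  have "W * (Z * (Tc - Ta)) < 0" using WZ Yneg by (simp add: mult.assoc)
  then have Wpos: "W > 0" using N by (auto simp: mult_less_0_iff)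
  have ya: "yc a = \<epsilon> * root (2*h) Ta / p 1 a" "yc c = \<epsilon> * root (2*h) Tc / p 1 c"
    by (simp_all add: yc_def Ta_eq Tc_eq)
  have "\<epsilon> * (Tc - Ta) * (P c (yc c) - P a (yc a)) = W * (c - a)"
    unfolding keq W_def by (simp add: algebra_simps)
  also have "\<dots> > 0" using Wpos ac by simp
  finally show ?thesis unfolding ya .
qed

lemma P_dy: "((\<lambda>y. P x y) has_real_derivative PY h L p x y) (at y)"
proof -
  have "((\<lambda>y. (\<Sum>l=1..L. p (2*h*l) x * y ^ (2*h*l)) + p 1 x * y + p 0 x) has_real_derivative
     (\<Sum>l=1..L. p (2*h*l) x * (real (2*h*l) * y ^ (2*h*l - Suc 0))) + p 1 x * 1 + 0) (at y)"
    by (intro DERIV_add DERIV_sum DERIV_cmult DERIV_pow DERIV_ident DERIV_const)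
  then show ?thesis unfolding PP_def PY_def by simp
qed

lemma vert: assumes x: "x \<in> I" and q0: "q (2*h) x = 0" and s: "s1 < s2"
  shows "P x (s1 / p 1 x) < P x (s2 / p 1 x)"
proof (rule DERIV_pos_imp_increasing[OF s])
  fix s assume "s1 \<le> s" "s \<le> s2"
  define y where "y = s / p 1 x"
  have a0: "p 1 x \<noteq> 0" using p1nz[OF x] .
  define T where "T = (p 1 x * y) ^ (2*h)"
  have T0: "T \<ge> 0" unfolding T_def by (simp add: power_mult)
  obtain d where d: "((\<lambda>x. B x T) has_real_derivative d) (at x)" "d > 0" using dB_pos[OF x T0] by blast
  have d2: "((\<lambda>x. B x T) has_real_derivative
     ((q' (2*h) x * p 1 x ^ (2*h) - q (2*h) x * (real (2*h) * (p' 1 x * p 1 x ^ (2*h - Suc 0)))) / (p 1 x ^ (2*h) * p 1 x ^ (2*h)) * T + q' 0 x)) (at x)"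
  proof -
    have "(\<lambda>x. B x T) = (\<lambda>x. r x * T + q 0 x)" by (simp add: B_def fun_eq_iff)
    then show ?thesis using DERIV_add[OF DERIV_cmult_right[OF r_deriv[OF x], of T] dq0[OF x]] by simp
  qed
  have "d = QX h q' x y" using DERIV_unique[OF d(1) d2] q0 a0
    by (simp add: QX_def T_def power_mult_distrib)
  then have QXp: "QX h q' x y > 0" using d(2) by simp
  have QY0: "QY h q x y = 0" by (simp add: QY_def q0)
  have "D x y = - (PY h L p x y * QX h q' x y)" by (simp add: DJ_def QY0)
  then have "PY h L p x y * p 1 x * QX h q' x y > 0" using D_sign[OF x, of y]
    by (simp add: algebra_simps)
  then have pos: "PY h L p x y * p 1 x > 0" using QXp by (simp add: zero_less_mult_iff)
  have der: "((\<lambda>s. P x (s / p 1 x)) has_real_derivative PY h L p x y * (1 / p 1 x)) (at s)"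
    using DERIV_chain'[OF DERIV_cdivide[OF DERIV_ident, of "p 1 x"] P_dy[of x "s / p 1 x"]]
    by (simp add: y_def)
  have "PY h L p x y * (1 / p 1 x) = (PY h L p x y * p 1 x) / (p 1 x * p 1 x)"
    using a0 by (simp add: field_simps)
  also have "\<dots> > 0" by (rule divide_pos_pos[OF pos]) (use a0 not_real_square_gt_zero in blast)
  finally show "\<exists>y. ((\<lambda>s. P x (s / p 1 x)) has_real_derivative y) (at s) \<and> 0 < y" using der by blast
qed

lemma Q_B': assumes "x \<in> I" "\<epsilon> = 1 \<or> \<epsilon> = -1"
  shows "Q x (\<epsilon> * u / p 1 x) = B x (u ^ (2*h))"
proof -
  have "(p 1 x * (\<epsilon> * u / p 1 x)) = \<epsilon> * u" using p1nz[OF assms(1)] by simp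
  moreover have "(\<epsilon> * u) ^ (2*h) = u ^ (2*h)" using assms(2) by (auto simp: power_mult_distrib power_mult)
  ultimately show ?thesis using Q_B[OF assms(1)] by simp
qed

lemma Mono:
  assumes x1: "x1 \<in> I" and x2: "x2 \<in> I" and eps: "\<epsilon> = 1 \<or> \<epsilon> = -1"
    and u1: "u1 \<ge> 0" and u2: "u2 \<ge> 0" and lt: "\<epsilon> * u1 < \<epsilon> * u2"
    and eqQ: "Q x1 (\<epsilon> * u1 / p 1 x1) = Q x2 (\<epsilon> * u2 / p 1 x2)"
  shows "P x1 (\<epsilon> * u1 / p 1 x1) < P x2 (\<epsilon> * u2 / p 1 x2)"
proof -
  have m0: "0 < 2*h" using h1 by simp
  define T1 where "T1 = u1 ^ (2*h)"
  define T2 where "T2 = u2 ^ (2*h)"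
  have T1: "T1 \<ge> 0" "root (2*h) T1 = u1" using u1 m0 by (simp_all add: T1_def real_root_power_cancel)
  have T2: "T2 \<ge> 0" "root (2*h) T2 = u2" using u2 m0 by (simp_all add: T2_def real_root_power_cancel)
  have BB: "B x1 T1 = B x2 T2" using eqQ Q_B'[OF x1 eps] Q_B'[OF x2 eps] by (simp add: T1_def T2_def)
  have sg: "\<epsilon> * (T2 - T1) > 0"
  proof (cases "\<epsilon> = 1")
    case True
    then have "u1 < u2" using lt by simp
    then have "T1 < T2" unfolding T1_def T2_def using u1 m0 by (intro power_strict_mono) auto
    then show ?thesis using True by simp
  next
    case False
    then have e: "\<epsilon> = -1" using eps by simp
    then have "u2 < u1" using lt by simp
    then have "T2 < T1" unfolding T1_def T2_def using u2 m0 by (intro power_strict_mono) auto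
    then show ?thesis using e by simp
  qed
  then have TT: "T1 \<noteq> T2" by auto
  consider "x1 < x2" | "x2 < x1" | "x1 = x2" by linarith
  then show ?thesis
  proof cases
    case 1
    have "\<epsilon> * (T2 - T1) * (P x2 (\<epsilon> * root (2*h) T2 / p 1 x2) - P x1 (\<epsilon> * root (2*h) T1 / p 1 x1)) > 0"
      by (rule Hlem[OF 1 x1 x2 T1(1) T2(1) TT BB eps])
    then have "P x2 (\<epsilon> * root (2*h) T2 / p 1 x2) - P x1 (\<epsilon> * root (2*h) T1 / p 1 x1) > 0"
      using sg pos_mult_pos by blast
    then show ?thesis unfolding T1 T2 by simp
  next
    case 2
    have "\<epsilon> * (T1 - T2) * (P x1 (\<epsilon> * root (2*h) T1 / p 1 x1) - P x2 (\<epsilon> * root (2*h) T2 / p 1 x2)) > 0"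
      by (rule Hlem[OF 2 x2 x1 T2(1) T1(1) TT[symmetric] BB[symmetric] eps])
    moreover have "\<epsilon> * (T1 - T2) < 0" using sg by (simp add: algebra_simps)
    ultimately have "P x1 (\<epsilon> * root (2*h) T1 / p 1 x1) - P x2 (\<epsilon> * root (2*h) T2 / p 1 x2) < 0"
      using neg_mult_pos by blast
    then show ?thesis unfolding T1 T2 by simp
  next
    case 3
    then have "r x1 * T1 = r x1 * T2" using BB by (simp add: B_def)
    then have "r x1 = 0" using TT by simp
    then have "q (2*h) x1 = 0" using p1nz[OF x1] by (simp add: r_def)
    then show ?thesis using vert[OF x1 _ lt] 3 by simp
  qed
qed

lemma noclash:
  assumes x1: "x1 \<in> I" and x2: "x2 \<in> I" and s: "p 1 x1 * y1 < p 1 x2 * y2"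
    and eP: "P x1 y1 = P x2 y2" and eQ: "Q x1 y1 = Q x2 y2"
  shows False
proof -
  define s1 where "s1 = p 1 x1 * y1"
  define s2 where "s2 = p 1 x2 * y2"
  have y1: "y1 = s1 / p 1 x1" using p1nz[OF x1] by (simp add: s1_def)
  have y2: "y2 = s2 / p 1 x2" using p1nz[OF x2] by (simp add: s2_def)
  have s12: "s1 < s2" using s by (simp add: s1_def s2_def)
  have e1: "(1::real) = 1 \<or> (1::real) = -1" by simp
  have em: "(-1::real) = 1 \<or> (-1::real) = -1" by simp
  consider "0 \<le> s1" | "s2 \<le> 0" | "s1 < 0" "0 < s2" by linarith
  then show False
  proof cases
    case 1
    have "0 \<le> s2" using 1 s12 by simp
    then have "P x1 (1 * s1 / p 1 x1) < P x2 (1 * s2 / p 1 x2)"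
      using Mono[OF x1 x2 e1 1 \<open>0 \<le> s2\<close>] s12 eQ y1 y2 by simp
    then show False using eP y1 y2 by simp
  next
    case 2
    have "P x1 (-1 * (-s1) / p 1 x1) < P x2 (-1 * (-s2) / p 1 x2)"
      using Mono[OF x1 x2 em, of "-s1" "-s2"] 2 s12 eQ y1 y2 by simp
    then show False using eP y1 y2 by simp
  next
    case 3
    define u where "u = - s1"
    have u0: "u > 0" using 3 by (simp add: u_def)
    have Pm: "P x1 (-y1) = P x1 y1 + 2 * u" using P_neg[of x1 y1] by (simp add: u_def s1_def)
    have my1: "-y1 = 1 * u / p 1 x1" "y1 = -1 * u / p 1 x1" using y1 by (simp_all add: u_def)
    have my2: "y2 = 1 * s2 / p 1 x2" "-y2 = -1 * s2 / p 1 x2" using y2 by simp_all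
    consider "u < s2" | "u = s2" | "s2 < u" by linarith
    then show False
    proof cases
      case 1
      have "P x1 (1 * u / p 1 x1) < P x2 (1 * s2 / p 1 x2)"
        using Mono[OF x1 x2 e1, of u s2] 1 u0 eQ Q_neg[of x1 y1] my1 my2 by simp
      then show False using Pm eP my1 my2 u0 by simp
    next
      case 2
      have "B x1 (u ^ (2*h)) = B x2 (s2 ^ (2*h))"
        using eQ Q_B'[OF x1 em, of u] Q_B'[OF x2 e1, of s2] my1 my2 by simp
      moreover have "s2 ^ (2*h) \<ge> 0" by (simp add: power_mult)
      ultimately have "x1 = x2" using B_inj[OF x1 x2] 2 by blast
      then have "-y1 = y2" using my1 my2 2 by simp
      then show False using Pm eP u0 \<open>x1 = x2\<close> by simp
    next
      case 3
      have "P x1 (-1 * u / p 1 x1) < P x2 (-1 * s2 / p 1 x2)"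
        using Mono[OF x1 x2 em, of u s2] 3 u0 eQ Q_neg[of x2 y2] my1 my2 \<open>0 < s2\<close> by simp
      then have "P x1 y1 < P x2 (-y2)" using my1(2) my2(2) by simp
      moreover have "P x2 (-y2) = P x2 y2 - 2 * s2" using P_neg[of x2 y2] by (simp add: s2_def)
      ultimately show False using eP \<open>0 < s2\<close> by simp
    qed
  qed
qed

lemma core_inj: "inj_on (\<lambda>(x, y). (P x y, Q x y)) (I \<times> UNIV)"
proof (rule inj_onI, clarify)
  fix x1 y1 x2 y2 assume x1: "x1 \<in> I" and x2: "x2 \<in> I" and eP: "P x1 y1 = P x2 y2" and eQ: "Q x1 y1 = Q x2 y2"
  consider "p 1 x1 * y1 < p 1 x2 * y2" | "p 1 x2 * y2 < p 1 x1 * y1" | "p 1 x1 * y1 = p 1 x2 * y2" by linarith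
  then show "x1 = x2 \<and> y1 = y2"
  proof cases
    case 1 then show ?thesis using noclash[OF x1 x2 1 eP eQ] by blast
  next
    case 2 then show ?thesis using noclash[OF x2 x1 2 eP[symmetric] eQ[symmetric]] by blast
  next
    case 3
    have "B x1 ((p 1 x1 * y1) ^ (2*h)) = B x2 ((p 1 x1 * y1) ^ (2*h))"
      using eQ Q_B[OF x1] Q_B[OF x2] 3 by simp
    moreover have "(p 1 x1 * y1) ^ (2*h) \<ge> 0" by (simp add: power_mult)
    ultimately have "x1 = x2" using B_inj[OF x1 x2] by blast
    then show ?thesis using 3 p1nz[OF x1] by simp
  qed
qed

end

lemma analytic_diff:
  assumes an: "real_analytic2_on f S" and ab: "(a, b) \<in> S"
  shows "(\<lambda>s. f (s, b)) differentiable (at a)"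
proof -
  obtain r c where r: "r > 0" and hs: "\<And>x y. dist (x, y) (a, b) < r \<Longrightarrow>
      ((\<lambda>(i, j). c i j * (x - a) ^ i * (y - b) ^ j) has_sum f (x, y)) UNIV"
    using an ab unfolding real_analytic2_on_def by fast
  have sm: "((\<lambda>i. c i 0 * z ^ i) has_sum f (a + z, b)) UNIV" if z: "norm z < r" for z
  proof -
    have d: "dist (a + z, b) (a, b) < r" using z by (simp add: dist_Pair_Pair dist_real_def)
    define G where "G = (\<lambda>(i, j). c i j * (a + z - a) ^ i * (b - b) ^ j)"
    have "(G has_sum f (a + z, b)) UNIV" using hs[OF d] by (simp add: G_def)
    then have "(G has_sum f (a + z, b)) (range (\<lambda>i. (i, 0::nat)))"
      by (subst (asm) has_sum_cong_neutral[where T = "range (\<lambda>i. (i, 0::nat))" and g = G]) (auto simp: G_def)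
    then have "((G \<circ> (\<lambda>i. (i, 0::nat))) has_sum f (a + z, b)) UNIV"
      by (subst (asm) has_sum_reindex) (auto simp: inj_on_def)
    then show ?thesis by (simp add: G_def o_def)
  qed
  define g where "g z = (\<Sum>i. c i 0 * z ^ i)" for z :: real
  have gs: "f (a + z, b) = g z" if "norm z < r" for z
    using has_sum_imp_sums[OF sm[OF that]] unfolding g_def by (simp add: sums_iff)
  have summ: "summable (\<lambda>n. c n 0 * z ^ n)" if "norm z < r" for z
    using has_sum_imp_sums[OF sm[OF that]] by (simp add: sums_iff)
  have "(g has_real_derivative (\<Sum>n. diffs (\<lambda>n. c n 0) n * 0 ^ n)) (at 0)"
    unfolding g_def by (rule termdiffs_strong'[of r]) (use summ r in auto)
  then have "((\<lambda>s. g (s - a)) has_real_derivative (\<Sum>n. diffs (\<lambda>n. c n 0) n * 0 ^ n) * 1) (at a)"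
    using DERIV_chain'[OF DERIV_diff[OF DERIV_ident DERIV_const, of a a], of g] by simp
  then have "((\<lambda>s. f (s, b)) has_real_derivative (\<Sum>n. diffs (\<lambda>n. c n 0) n * 0 ^ n) * 1) (at a)"
  proof (rule has_field_derivative_transform_within_open[where S = "ball a r"])
    fix s assume "s \<in> ball a r"
    then have "norm (s - a) < r" by (simp add: dist_real_def abs_minus_commute)
    then show "g (s - a) = f (s, b)" using gs[of "s - a"] by simp
  qed (use r in auto)
  then show ?thesis unfolding real_differentiable_def by blast
qed

lemma coeff_diff:
  fixes \<pi> :: "real \<Rightarrow> real poly"
  assumes "infinite S" "\<And>x. degree (\<pi> x) \<le> n" "\<And>z. z \<in> S \<Longrightarrow> (\<lambda>x. poly (\<pi> x) z) differentiable (at x0)"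
  shows "(\<lambda>x. coeff (\<pi> x) k) differentiable (at x0)"
  using assms
proof (induction n arbitrary: \<pi> S k)
  case 0
  obtain z where z: "z \<in> S" using infinite_imp_nonempty[OF "0.prems"(1)] by blast
  show ?case
  proof (cases k)
    case 0
    have "poly (\<pi> x) z = coeff (\<pi> x) 0" for x using "0.prems"(2)[of x] by (simp add: poly_altdef)
    then show ?thesis using "0.prems"(3)[OF z] \<open>k = 0\<close> by simp
  next
    case (Suc j)
    then have "coeff (\<pi> x) k = 0" for x using "0.prems"(2)[of x] by (simp add: coeff_eq_0)
    then show ?thesis by simp
  qed
next
  case (Suc n)
  obtain z0 where z0: "z0 \<in> S" using infinite_imp_nonempty[OF Suc.prems(1)] by blast
  define \<sigma> where "\<sigma> x = synthetic_div (\<pi> x) z0" for x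
  have decomp: "\<pi> x = [:-z0, 1:] * \<sigma> x + [:poly (\<pi> x) z0:]" for x
    unfolding \<sigma>_def by (rule synthetic_div_correct'[symmetric])
  have pz: "poly (\<sigma> x) z = (poly (\<pi> x) z - poly (\<pi> x) z0) / (z - z0)" if "z \<noteq> z0" for x z
  proof -
    have "poly (\<pi> x) z = (z - z0) * poly (\<sigma> x) z + poly (\<pi> x) z0"
      by (subst decomp) (simp add: algebra_simps)
    then show ?thesis using that by (simp add: field_simps)
  qed
  have IH: "(\<lambda>x. coeff (\<sigma> x) j) differentiable (at x0)" for j
  proof (rule Suc.IH[of "S - {z0}"])
    show "infinite (S - {z0})" using Suc.prems(1) by simp
    show "degree (\<sigma> x) \<le> n" for x using Suc.prems(2)[of x] by (simp add: \<sigma>_def degree_synthetic_div)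
    fix z assume "z \<in> S - {z0}"
    then have "z \<in> S" "z \<noteq> z0" by auto
    then show "(\<lambda>x. poly (\<sigma> x) z) differentiable (at x0)"
      unfolding pz[OF \<open>z \<noteq> z0\<close>]
      using Suc.prems(3)[OF \<open>z \<in> S\<close>] Suc.prems(3)[OF z0] by (intro derivative_intros) auto
  qed
  have cf: "coeff (\<pi> x) k = - z0 * coeff (\<sigma> x) k + (case k of 0 \<Rightarrow> poly (\<pi> x) z0 | Suc j \<Rightarrow> coeff (\<sigma> x) j)" for x
    by (subst decomp) (cases k; simp)
  have eqf: "(\<lambda>x. coeff (\<pi> x) k) = (\<lambda>x. - z0 * coeff (\<sigma> x) k + (case k of 0 \<Rightarrow> poly (\<pi> x) z0 | Suc j \<Rightarrow> coeff (\<sigma> x) j))"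
    using cf by auto
  show ?case unfolding eqf
    by (cases k) (use IH Suc.prems(3)[OF z0] in \<open>auto intro!: derivative_intros\<close>)
qed


lemma darb1:
  fixes g g' :: "real \<Rightarrow> real"
  assumes ac: "a < c" and der: "\<And>x. a \<le> x \<Longrightarrow> x \<le> c \<Longrightarrow> (g has_real_derivative g' x) (at x)"
    and ga: "g' a > 0" and gc: "g' c < 0"
  shows "\<exists>z. a < z \<and> z < c \<and> g' z = 0"
proof -
  have cont: "continuous_on {a..c} g"
  proof (intro continuous_at_imp_continuous_on ballI)
    fix x assume "x \<in> {a..c}"
    then show "isCont g x" by (intro DERIV_isCont[OF der]) auto
  qed
  obtain z where z: "z \<in> {a..c}" "\<forall>y\<in>{a..c}. g y \<le> g z"
    using continuous_attains_sup[OF compact_Icc _ cont] ac by auto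
  obtain d1 where d1: "d1 > 0" "\<forall>h>0. h < d1 \<longrightarrow> g a < g (a + h)"
    using DERIV_pos_inc_right[OF der[of a] ga] ac by auto
  define h1 where "h1 = min (d1/2) (c - a)"
  have "g a < g (a + h1)" using d1 ac by (simp add: h1_def)
  moreover have "g (a + h1) \<le> g z" using z ac d1 by (simp add: h1_def)
  ultimately have za: "z \<noteq> a" by auto
  obtain d2 where d2: "d2 > 0" "\<forall>h>0. h < d2 \<longrightarrow> g c < g (c - h)"
    using DERIV_neg_dec_left[OF der[of c] gc] ac by auto
  define h2 where "h2 = min (d2/2) (c - a)"
  have "g c < g (c - h2)" using d2 ac by (simp add: h2_def)
  moreover have "g (c - h2) \<le> g z" using z ac d2 by (simp add: h2_def)
  ultimately have zc: "z \<noteq> c" by auto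
  have zz: "a < z" "z < c" using z za zc by auto
  have "g' z = 0"
  proof (rule DERIV_local_max[OF der[of z], of "min (z - a) (c - z)"])
    show "\<forall>y. \<bar>z - y\<bar> < min (z - a) (c - z) \<longrightarrow> g y \<le> g z"
    proof (intro allI impI)
      fix y assume "\<bar>z - y\<bar> < min (z - a) (c - z)"
      then have "y \<in> {a..c}" by (auto simp: abs_less_iff)
      then show "g y \<le> g z" using z(2) by blast
    qed
  qed (use zz in auto)
  then show ?thesis using zz by blast
qed

lemma darboux_sign:
  fixes g g' :: "real \<Rightarrow> real"
  assumes I: "is_interval I" and der: "\<And>x. x \<in> I \<Longrightarrow> (g has_real_derivative g' x) (at x)"
    and nz: "\<And>x. x \<in> I \<Longrightarrow> g' x \<noteq> 0"
  shows "(\<forall>x\<in>I. g' x > 0) \<or> (\<forall>x\<in>I. g' x < 0)"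
proof (rule ccontr)
  assume "\<not> ?thesis"
  then obtain a c where a: "a \<in> I" "g' a > 0" and c: "c \<in> I" "g' c < 0"
    using nz by (metis linorder_neqE_linordered_idom)
  have sub: "x \<in> I" if "u \<in> I" "v \<in> I" "u \<le> x" "x \<le> v" for u v x
    using I that unfolding is_interval_1 by blast
  have "a \<noteq> c" using a c by auto
  then consider "a < c" | "c < a" by linarith
  then show False
  proof cases
    case 1
    have der': "(g has_real_derivative g' x) (at x)" if "a \<le> x" "x \<le> c" for x
      using der sub[OF a(1) c(1) that] by blast
    obtain z where z: "a < z" "z < c" "g' z = 0" using darb1[OF 1 der' a(2) c(2)] by blast
    have "z \<in> I" using sub[OF a(1) c(1)] z by simp
    then show False using nz z(3) by blast
  next
    case 2
    have der': "((\<lambda>x. - g x) has_real_derivative - g' x) (at x)" if "c \<le> x" "x \<le> a" for x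
      using DERIV_minus[OF der[OF sub[OF c(1) a(1) that]]] .
    have "- g' c > 0" "- g' a < 0" using a(2) c(2) by simp_all
    then obtain z where z: "c < z" "z < a" "- g' z = 0" using darb1[OF 2 der'] by blast
    have "z \<in> I" using sub[OF c(1) a(1)] z by simp
    then show False using nz z(3) by simp
  qed
qed

lemma PP_neg: "h \<ge> 1 \<Longrightarrow> PP h L p x (-y) = PP h L p x y - 2 * p 1 x * y"
proof -
  have "(-y)^(2*h*l) = y^(2*h*l)" for l
    using pm_even[of y "h*l"] by (simp add: mult.assoc)
  then show ?thesis by (simp add: PP_def)
qed

lemma PP_zero: "h \<ge> 1 \<Longrightarrow> PP h L p x 0 = p 0 x"
proof -
  assume h1: "h \<ge> 1"
  have "(0::real) ^ (2*h*l) = 0" if "l \<in> {1..L}" for l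
    using h1 that by (intro zero_power) simp
  then show ?thesis unfolding PP_def by (simp add: sum.neutral)
qed

lemma PP_dx:
  assumes "\<And>l. l \<in> {1..L} \<Longrightarrow> (p (2*h*l) has_real_derivative p' (2*h*l) x) (at x)"
    "(p 1 has_real_derivative p' 1 x) (at x)" "(p 0 has_real_derivative p' 0 x) (at x)"
  shows "((\<lambda>s. PP h L p s y) has_real_derivative PX h L p' x y) (at x)"
  unfolding PP_def PX_def
  by (intro DERIV_add DERIV_sum DERIV_cmult_right assms)

lemma PP_dy: "((\<lambda>t. PP h L p x t) has_real_derivative PY h L p x y) (at y)"
proof -
  have "((\<lambda>y. (\<Sum>l=1..L. p (2*h*l) x * y ^ (2*h*l)) + p 1 x * y + p 0 x) has_real_derivative
     (\<Sum>l=1..L. p (2*h*l) x * (real (2*h*l) * y ^ (2*h*l - Suc 0))) + p 1 x * 1 + 0) (at y)"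
    by (intro DERIV_add DERIV_sum DERIV_cmult DERIV_pow DERIV_ident DERIV_const)
  then show ?thesis unfolding PP_def PY_def by simp
qed

lemma QQ_dx:
  assumes "(q (2*h) has_real_derivative q' (2*h) x) (at x)" "(q 0 has_real_derivative q' 0 x) (at x)"
  shows "((\<lambda>s. QQ h q s y) has_real_derivative QX h q' x y) (at x)"
  unfolding QQ_def QX_def by (intro DERIV_add DERIV_cmult_right assms)

lemma QQ_dy: "((\<lambda>t. QQ h q x t) has_real_derivative QY h q x y) (at y)"
proof -
  have "((\<lambda>y. q (2*h) x * y ^ (2*h) + q 0 x) has_real_derivative
     q (2*h) x * (real (2*h) * y ^ (2*h - Suc 0)) + 0) (at y)"
    by (intro DERIV_add DERIV_cmult DERIV_pow DERIV_const)
  then show ?thesis unfolding QQ_def QY_def by simp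
qed

lemma DJ_neg: "DJ h L p p' (\<lambda>k x. - q k x) (\<lambda>k x. - q' k x) x y = - DJ h L p p' q q' x y"
  by (simp add: DJ_def QX_def QY_def algebra_simps)

lemma QQ_neg: "QQ h (\<lambda>k x. - q k x) x y = - QQ h q x y"
  by (simp add: QQ_def)

lemma DJ_zero: "h \<ge> 1 \<Longrightarrow> DJ h L p p' q q' x 0 = - p 1 x * q' 0 x"
proof -
  assume h1: "h \<ge> 1"
  have "QY h q x 0 = 0" using h1 by (simp add: QY_def)
  moreover have "PY h L p x 0 = p 1 x"
  proof -
    have "(0::real) ^ (2*h*l - 1) = 0" if "l \<in> {1..L}" for l
    proof -
      have "h * l \<ge> 1" using h1 that by (simp add: Suc_le_eq)
      moreover have "2*h*l = 2*(h*l)" by (simp add: mult.assoc)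
      ultimately have "0 < 2*h*l - 1" by linarith
      then show ?thesis by (rule zero_power)
    qed
    then have "(\<Sum>l = 1..L. p (2*h*l) x * (real (2*h*l) * 0 ^ (2*h*l - 1))) = 0"
      by (intro sum.neutral) simp
    then show ?thesis unfolding PY_def by simp
  qed
  moreover have "QX h q' x 0 = q' 0 x" using h1 by (simp add: QX_def)
  ultimately show ?thesis by (simp add: DJ_def)
qed

theorem theorem3:
  fixes I :: "real set" and h L :: nat
    and p q :: "nat \<Rightarrow> real \<Rightarrow> real"
    and F :: "real \<times> real \<Rightarrow> real \<times> real"
  assumes I_open: "open I" and I_interval: "is_interval I"
    and h: "h \<ge> 1" and L: "L \<ge> 1"
    and F_def: "\<And>x y. F (x, y) =
        ((\<Sum>l = 1..L. p (2 * h * l) x * y ^ (2 * h * l)) + p 1 x * y + p 0 x,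
         q (2 * h) x * y ^ (2 * h) + q 0 x)"
    and F_analytic: "real_analytic_map_on F (I \<times> UNIV)"
    and nonsingular: "\<forall>x \<in> I. \<forall>y. jac_det F x y \<noteq> 0"
    and p1: "\<forall>x \<in> I. p 1 x \<noteq> 0"
  shows "inj_on F (I \<times> UNIV)"
proof -
  have Fx: "F (x, y) = (PP h L p x y, QQ h q x y)" for x y
    by (simp add: F_def PP_def QQ_def)
  have dfst: "(\<lambda>s. PP h L p s y) differentiable (at x)" if "x \<in> I" for x y
    using analytic_diff[of "\<lambda>z. fst (F z)" "I \<times> UNIV" x y] F_analytic that
    unfolding real_analytic_map_on_def by (simp add: Fx)
  have dsnd: "(\<lambda>s. QQ h q s y) differentiable (at x)" if "x \<in> I" for x y
    using analytic_diff[of "\<lambda>z. snd (F z)" "I \<times> UNIV" x y] F_analytic that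
    unfolding real_analytic_map_on_def by (simp add: Fx)
  have hpos: "0 < 2*h" using h by simp
  have dq0: "q 0 differentiable (at x)" if "x \<in> I" for x
  proof -
    have "q 0 = (\<lambda>s. QQ h q s 0)" using hpos by (simp add: QQ_def fun_eq_iff)
    then show ?thesis using dsnd[OF that, of 0] by simp
  qed
  have dqm: "q (2*h) differentiable (at x)" if "x \<in> I" for x
  proof -
    have "q (2*h) = (\<lambda>s. QQ h q s 1 - QQ h q s 0)" using hpos by (simp add: QQ_def fun_eq_iff)
    then show ?thesis using dsnd[OF that, of 1] dsnd[OF that, of 0] by (simp add: derivative_intros)
  qed
  have dp0: "p 0 differentiable (at x)" if "x \<in> I" for x
  proof -
    have "p 0 = (\<lambda>s. PP h L p s 0)" using PP_zero[OF h] by (simp add: fun_eq_iff)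
    then show ?thesis using dfst[OF that, of 0] by simp
  qed
  have dp1: "p 1 differentiable (at x)" if "x \<in> I" for x
  proof -
    have "p 1 = (\<lambda>s. (PP h L p s 1 - PP h L p s (-1)) / 2)" using PP_neg[OF h] by (simp add: fun_eq_iff)
    then show ?thesis using dfst[OF that, of 1] dfst[OF that, of "-1"] by (simp add: derivative_intros)
  qed
  have dpl: "p (2*h*l) differentiable (at x)" if x: "x \<in> I" and l: "l \<in> {1..L}" for x l
  proof -
    define \<pi> where "\<pi> s = (\<Sum>l\<in>{1..L}. monom (p (2*h*l) s) l)" for s
    have deg: "degree (\<pi> s) \<le> L" for s
      unfolding \<pi>_def by (intro degree_le) (auto simp: coeff_sum coeff_monom)
    have co: "coeff (\<pi> s) l = p (2*h*l) s" for s
      unfolding \<pi>_def using l by (simp add: coeff_sum coeff_monom)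
    have pv: "poly (\<pi> s) z = PP h L p s (root (2*h) z) - p 1 s * root (2*h) z - p 0 s" if "z > 0" for s z
    proof -
      have e: "root (2*h) z ^ (2*h*k) = z ^ k" for k
      proof -
        have "root (2*h) z ^ (2*h*k) = (root (2*h) z ^ (2*h)) ^ k" by (rule power_mult)
        also have "\<dots> = z ^ k" using that hpos by simp
        finally show ?thesis .
      qed
      have "PP h L p s (root (2*h) z) = (\<Sum>l=1..L. p (2*h*l) s * z^l) + p 1 s * root (2*h) z + p 0 s"
        by (simp only: PP_def e)
      moreover have "poly (\<pi> s) z = (\<Sum>l=1..L. p (2*h*l) s * z^l)"
        by (simp add: \<pi>_def poly_sum poly_monom)
      ultimately show ?thesis by simp
    qed
    have "(\<lambda>s. coeff (\<pi> s) l) differentiable (at x)"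
    proof (rule coeff_diff[of "{0<..}" \<pi> L])
      show "infinite {0::real<..}" by (rule infinite_Ioi)
      show "degree (\<pi> s) \<le> L" for s by (rule deg)
      fix z :: real assume "z \<in> {0<..}"
      then have "z > 0" by simp
      show "(\<lambda>s. poly (\<pi> s) z) differentiable (at x)"
        unfolding pv[OF \<open>z > 0\<close>]
        using dfst[OF x, of "root (2*h) z"] dp1[OF x] dp0[OF x] by (intro derivative_intros) auto
    qed
    then show ?thesis unfolding co by simp
  qed
  define p' where "p' k x = deriv (p k) x" for k x
  define q' where "q' k x = deriv (q k) x" for k x
  have Dp: "(p (2*h*l) has_real_derivative p' (2*h*l) x) (at x)" if "x \<in> I" "l \<in> {1..L}" for x l
    using dpl[OF that] DERIV_deriv_iff_real_differentiable p'_def by simp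
  have Dp1: "(p 1 has_real_derivative p' 1 x) (at x)" if "x \<in> I" for x
    using dp1[OF that] DERIV_deriv_iff_real_differentiable p'_def by simp
  have Dp0: "(p 0 has_real_derivative p' 0 x) (at x)" if "x \<in> I" for x
    using dp0[OF that] DERIV_deriv_iff_real_differentiable p'_def by simp
  have Dq0: "(q 0 has_real_derivative q' 0 x) (at x)" if "x \<in> I" for x
    using dq0[OF that] DERIV_deriv_iff_real_differentiable q'_def by simp
  have Dqm: "(q (2*h) has_real_derivative q' (2*h) x) (at x)" if "x \<in> I" for x
    using dqm[OF that] DERIV_deriv_iff_real_differentiable q'_def by simp
  have jac: "jac_det F x y = DJ h L p p' q q' x y" if x: "x \<in> I" for x y
  proof -
    have "deriv (\<lambda>s. fst (F (s, y))) x = PX h L p' x y"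
      unfolding Fx fst_conv by (rule DERIV_imp_deriv[OF PP_dx]) (use Dp Dp1 Dp0 x in auto)
    moreover have "deriv (\<lambda>s. snd (F (s, y))) x = QX h q' x y"
      unfolding Fx snd_conv by (rule DERIV_imp_deriv[OF QQ_dx]) (use Dqm Dq0 x in auto)
    moreover have "deriv (\<lambda>t. fst (F (x, t))) y = PY h L p x y"
      unfolding Fx fst_conv by (rule DERIV_imp_deriv[OF PP_dy])
    moreover have "deriv (\<lambda>t. snd (F (x, t))) y = QY h q x y"
      unfolding Fx snd_conv by (rule DERIV_imp_deriv[OF QQ_dy])
    ultimately show ?thesis by (simp add: jac_det_def DJ_def)
  qed
  have nz: "DJ h L p p' q q' x y \<noteq> 0" if "x \<in> I" for x y
    using nonsingular that jac by auto
  have q0nz: "q' 0 x \<noteq> 0" if "x \<in> I" for x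
    using nz[OF that, of 0] DJ_zero[OF h] by auto
  have Fcong: "inj_on F (I \<times> UNIV) \<longleftrightarrow> inj_on (\<lambda>(x, y). (PP h L p x y, QQ h q x y)) (I \<times> UNIV)"
    by (rule inj_on_cong) (auto simp: Fx)
  from darboux_sign[OF I_interval Dq0 q0nz]
  show ?thesis
  proof
    assume pos: "\<forall>x\<in>I. q' 0 x > 0"
    interpret core I h L p q p' q'
    proof unfold_locales
      show "open I" by (rule I_open)
      show "is_interval I" by (rule I_interval)
      show "h \<ge> 1" by (rule h)
      show "\<And>x l. x \<in> I \<Longrightarrow> l \<in> {1..L} \<Longrightarrow> (p (2*h*l) has_real_derivative p' (2*h*l) x) (at x)" by (rule Dp)
      show "\<And>x. x \<in> I \<Longrightarrow> (p 1 has_real_derivative p' 1 x) (at x)" by (rule Dp1)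
      show "\<And>x. x \<in> I \<Longrightarrow> (p 0 has_real_derivative p' 0 x) (at x)" by (rule Dp0)
      show "\<And>x. x \<in> I \<Longrightarrow> p 1 x \<noteq> 0" using p1 by blast
      show "\<And>x. x \<in> I \<Longrightarrow> (q 0 has_real_derivative q' 0 x) (at x)" by (rule Dq0)
      show "\<And>x. x \<in> I \<Longrightarrow> (q (2*h) has_real_derivative q' (2*h) x) (at x)" by (rule Dqm)
      show "\<And>x y. x \<in> I \<Longrightarrow> DJ h L p p' q q' x y \<noteq> 0" by (rule nz)
      show "\<And>x. x \<in> I \<Longrightarrow> q' 0 x > 0" using pos by blast
    qed
    show ?thesis using core_inj Fcong by simp
  next
    assume neg: "\<forall>x\<in>I. q' 0 x < 0"
    interpret core I h L p "\<lambda>k x. - q k x" p' "\<lambda>k x. - q' k x"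
    proof unfold_locales
      show "open I" by (rule I_open)
      show "is_interval I" by (rule I_interval)
      show "h \<ge> 1" by (rule h)
      show "\<And>x l. x \<in> I \<Longrightarrow> l \<in> {1..L} \<Longrightarrow> (p (2*h*l) has_real_derivative p' (2*h*l) x) (at x)" by (rule Dp)
      show "\<And>x. x \<in> I \<Longrightarrow> (p 1 has_real_derivative p' 1 x) (at x)" by (rule Dp1)
      show "\<And>x. x \<in> I \<Longrightarrow> (p 0 has_real_derivative p' 0 x) (at x)" by (rule Dp0)
      show "\<And>x. x \<in> I \<Longrightarrow> p 1 x \<noteq> 0" using p1 by blast
      show "\<And>x. x \<in> I \<Longrightarrow> ((\<lambda>x. - q 0 x) has_real_derivative - q' 0 x) (at x)" by (rule DERIV_minus[OF Dq0])
      show "\<And>x. x \<in> I \<Longrightarrow> ((\<lambda>x. - q (2*h) x) has_real_derivative - q' (2*h) x) (at x)" by (rule DERIV_minus[OF Dqm])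
      show "\<And>x y. x \<in> I \<Longrightarrow> DJ h L p p' (\<lambda>k x. - q k x) (\<lambda>k x. - q' k x) x y \<noteq> 0" using nz by (simp add: DJ_neg)
      show "\<And>x. x \<in> I \<Longrightarrow> - q' 0 x > 0" using neg by auto
    qed
    have G: "inj_on (\<lambda>(x, y). (PP h L p x y, - QQ h q x y)) (I \<times> UNIV)"
      using core_inj by (simp only: QQ_neg)
    have "inj_on (\<lambda>(x, y). (PP h L p x y, QQ h q x y)) (I \<times> UNIV)"
    proof (rule inj_onI)
      fix z1 z2 assume z1: "z1 \<in> I \<times> UNIV" and z2: "z2 \<in> I \<times> UNIV"
        and e: "(\<lambda>(x, y). (PP h L p x y, QQ h q x y)) z1 = (\<lambda>(x, y). (PP h L p x y, QQ h q x y)) z2"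
      obtain x1 y1 where e1: "z1 = (x1, y1)" by (cases z1)
      obtain x2 y2 where e2: "z2 = (x2, y2)" by (cases z2)
      from e have "(\<lambda>(x, y). (PP h L p x y, - QQ h q x y)) z1 = (\<lambda>(x, y). (PP h L p x y, - QQ h q x y)) z2"
        unfolding e1 e2 by simp
      then show "z1 = z2" using inj_onD[OF G _ z1 z2] by blast
    qed
    then show ?thesis using Fcong by simp
  qed
qed

end
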